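(* Let $p$ be an odd prime. Let $M_p$ be the number of solutions $(x,y,z)\in\mathbb{F}_p^3$ of $$z^2=(x^2y^2+1)(x^2+y^2),$$ and let $N_p$ be the number of solutions $(x,y)\in\mathbb{F}_p^2$ of $y^2=x^3-x$. Then $$M_p=(p+1)^2+(N_p-p)^2+1=\begin{cases}(p+1)^2+J(k)^2+1 & \text{if } p=4k+1,\\ (p+1)^2+1 & \text{if } p=4k+3,\end{cases}$$ where for $p=4k+1$, $J(k)=\sum_{i=1}^{4k-2}\big(\frac{i(i+1)(i+2)}{p}\big)$.
   Context: $\big(\frac{a}{p}\big)$ is the Legendre symbol. *)

theory Defs
  imports "HOL-Number_Theory.Number_Theory"
begin

text \<open>Points of F_p are represented by residues 0..p-1 (as integers); equations are read mod p.\<close>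

definition M_count :: "nat \<Rightarrow> nat" where
  "M_count p = card {(x, y, z). x \<in> {0..<int p} \<and> y \<in> {0..<int p} \<and> z \<in> {0..<int p} \<and>
      [z^2 = (x^2 * y^2 + 1) * (x^2 + y^2)] (mod int p)}"

definition N_count :: "nat \<Rightarrow> nat" where
  "N_count p = card {(x, y). x \<in> {0..<int p} \<and> y \<in> {0..<int p} \<and>
      [y^2 = x^3 - x] (mod int p)}"

definition J :: "nat \<Rightarrow> int" where
  "J k = (\<Sum>i = 1..4*k-2. Legendre (int i * (int i + 1) * (int i + 2)) (int (4*k+1)))"

end

theory Submission
  imports Defs
begin

locale oddp =
  fixes p :: int
  assumes pp: "prime p" and p2: "p > 2"
begin

definition chi :: "int \<Rightarrow> int" where "chi a = Legendre a p"

lemma chi_vals: "chi a = 0 \<or> chi a = 1 \<or> chi a = -1"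
  unfolding chi_def Legendre_def by auto

lemma chi_zero_iff: "chi a = 0 \<longleftrightarrow> p dvd a"
  unfolding chi_def Legendre_def by (auto simp: cong_0_iff)

lemma small_cong_eq:
  assumes "x \<in> {-1,0,1::int}" "y \<in> {-1,0,1}" "[x = y] (mod p)"
  shows "x = y"
proof -
  have "p dvd (x - y)" using assms(3) by (simp add: cong_iff_dvd_diff)
  moreover have "\<bar>x - y\<bar> < p" using assms(1,2) p2 by auto
  ultimately show ?thesis using dvd_imp_le_int[of "x-y" p] p2 by fastforce
qed

lemma euler: "[chi a = a ^ ((nat p - 1) div 2)] (mod p)"
proof -
  have pn: "prime (nat p)" using pp p2 by (simp add: prime_nat_int_transfer)
  have "[Legendre a (int (nat p)) = a ^ ((nat p - 1) div 2)] (mod int (nat p))"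
    using euler_criterion[OF pn] p2 by simp
  then show ?thesis using p2 by (simp add: chi_def)
qed

lemma chi_mult: "chi (a * b) = chi a * chi b"
proof -
  have "[chi (a*b) = (a*b) ^ ((nat p - 1) div 2)] (mod p)" by (rule euler)
  also have "(a*b) ^ ((nat p - 1) div 2) = a ^ ((nat p - 1) div 2) * b ^ ((nat p - 1) div 2)"
    by (simp add: power_mult_distrib)
  also have "[\<dots> = chi a * chi b] (mod p)"
    using euler[of a] euler[of b] by (intro cong_mult) (auto simp: cong_sym)
  finally show ?thesis
    using chi_vals[of "a*b"] chi_vals[of a] chi_vals[of b]
    by (intro small_cong_eq) auto
qed

lemma chi_cong: "[a = b] (mod p) \<Longrightarrow> chi a = chi b"
proof -
  assume h: "[a = b] (mod p)"
  have "[chi a = a ^ ((nat p - 1) div 2)] (mod p)" by (rule euler)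
  also have "[a ^ ((nat p - 1) div 2) = b ^ ((nat p - 1) div 2)] (mod p)"
    using h by (rule cong_pow)
  also have "[b ^ ((nat p - 1) div 2) = chi b] (mod p)" using euler[of b] by (simp add: cong_sym)
  finally show ?thesis using chi_vals[of a] chi_vals[of b] by (intro small_cong_eq) auto
qed

lemma chi_mod: "chi (a mod p) = chi a"
  by (rule chi_cong) (simp add: cong_def)

lemma chi_sq: "\<not> p dvd a \<Longrightarrow> chi a * chi a = 1"
  using chi_vals[of a] chi_zero_iff[of a] by auto

lemma chi_sq2: "\<not> p dvd a \<Longrightarrow> chi (a^2) = 1"
  using chi_sq by (simp add: power2_eq_square chi_mult)

lemma chi_one: "chi 1 = 1"
  using chi_sq2[of 1] pp p2 by (simp add: zdvd_not_zless)


abbreviation "R \<equiv> {0..<p}"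
abbreviation "Rs \<equiv> {1..<p}"

lemma p_dvd_R: "x \<in> R \<Longrightarrow> p dvd x \<longleftrightarrow> x = 0"
  using zdvd_not_zless[of x p] by (cases "x > 0") auto

lemma cong_R: "x \<in> R \<Longrightarrow> y \<in> R \<Longrightarrow> [x = y] (mod p) \<Longrightarrow> x = y"
  using cong_less_imp_eq_int by auto

lemma sq_roots:
  assumes "[z^2 = y^2] (mod p)"
  shows "[z = y] (mod p) \<or> [z = -y] (mod p)"
proof -
  have "p dvd (z - y) * (z + y)" using assms
    by (simp add: cong_iff_dvd_diff power2_eq_square algebra_simps)
  then have "p dvd (z - y) \<or> p dvd (z + y)" using pp prime_dvd_multD by blast
  then show ?thesis by (auto simp: cong_iff_dvd_diff)
qed

lemma sqcount: "int (card {z\<in>R. [z^2 = c] (mod p)}) = 1 + chi c"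
proof (cases "p dvd c")
  case True
  have "{z\<in>R. [z^2 = c] (mod p)} = {0}"
  proof safe
    fix z assume z: "z \<in> R" "[z^2 = c] (mod p)"
    then have "p dvd z^2" using True by (simp add: cong_dvd_iff)
    then have "p dvd z" using pp prime_dvd_power_iff by (metis prime_dvd_power)
    then show "z = 0" using p_dvd_R z by auto
  next
    show "0 \<in> R" using p2 by auto
    show "[0^2 = c] (mod p)" using True by (simp add: cong_def dvd_eq_mod_eq_0)
  qed
  moreover have "chi c = 0" using True chi_zero_iff by simp
  ultimately show ?thesis by simp
next
  case False
  show ?thesis
  proof (cases "QuadRes p c")
    case True
    then obtain y where y: "[y^2 = c] (mod p)" unfolding QuadRes_def by auto
    define y0 where "y0 = y mod p"
    have y0R: "y0 \<in> R" using p2 by (simp add: y0_def)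
    have "[y0 = y] (mod p)" by (simp add: y0_def cong_def)
    have y0c: "[y0^2 = c] (mod p)" using cong_trans[OF cong_pow[OF \<open>[y0 = y] (mod p)\<close>] y] .
    have y0nz: "y0 \<noteq> 0"
    proof
      assume "y0 = 0"
      then have "[c = 0] (mod p)" using y0c cong_sym by simp
      then show False using False by (simp add: cong_0_iff)
    qed
    have "{z\<in>R. [z^2 = c] (mod p)} = {y0, p - y0}"
    proof (intro equalityI subsetI)
      fix z assume "z \<in> {z\<in>R. [z^2 = c] (mod p)}"
      then have z: "z \<in> R" "[z^2 = c] (mod p)" by auto
      show "z \<in> {y0, p - y0}"
      proof (cases "z = p - y0")
      case False
      note z = z False
      have "[z^2 = y0^2] (mod p)" using cong_trans[OF z(2) cong_sym[OF y0c]] .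
      then have "[z = y0] (mod p) \<or> [z = -y0] (mod p)" by (rule sq_roots)
      moreover have "\<not> [z = -y0] (mod p)"
      proof
        assume "[z = -y0] (mod p)"
        moreover have "[-y0 = p - y0] (mod p)" by (simp add: cong_iff_dvd_diff)
        ultimately have "[z = p - y0] (mod p)" by (rule cong_trans)
        then have "z = p - y0" using z y0R y0nz by (intro cong_R) auto
        then show False using z by simp
      qed
      ultimately have "[z = y0] (mod p)" by simp
      then have "z = y0" using z y0R by (intro cong_R) auto
      then show ?thesis by simp
      qed simp
    next
      fix z assume zz: "z \<in> {y0, p - y0}"
      have "p - y0 \<in> R" using y0R y0nz by auto
      moreover have "[(p - y0)^2 = y0^2] (mod p)"
        by (simp add: cong_iff_dvd_diff power2_eq_square algebra_simps)
      then have "[(p - y0)^2 = c] (mod p)" using y0c by (rule cong_trans)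
      ultimately show "z \<in> {z\<in>R. [z^2 = c] (mod p)}" using zz y0R y0c by auto
    qed
    moreover have "y0 \<noteq> p - y0"
    proof
      assume "y0 = p - y0"
      then have "p = 2 * y0" by simp
      then have "2 dvd p" by simp
      moreover have "\<forall>m. m \<ge> 0 \<and> m dvd p \<longrightarrow> m = 1 \<or> m = p" using pp prime_int_iff by blast
      ultimately have "2 = (1::int) \<or> 2 = p" by (metis dvd_refl zero_le_numeral)
      then show False using p2 by simp
    qed
    moreover have "chi c = 1" using True False unfolding chi_def Legendre_def by (simp add: cong_0_iff)
    ultimately show ?thesis by simp
  next
    case nq: False
    have "{z\<in>R. [z^2 = c] (mod p)} = {}" using nq unfolding QuadRes_def by auto
    moreover have "chi c = -1" using nq False unfolding chi_def Legendre_def by (simp add: cong_0_iff)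
    ultimately show ?thesis by (simp only:) simp
  qed
qed


lemma perm_sum:
  assumes "finite A" "f ` A \<subseteq> A" "inj_on f A"
  shows "(\<Sum>x\<in>A. F (f x)) = (\<Sum>x\<in>A. F x)"
proof -
  have "(\<Sum>x\<in>A. F (f x)) = sum F (f ` A)" by (simp add: sum.reindex[OF assms(3)])
  also have "f ` A = A" using endo_inj_surj[OF assms] .
  finally show ?thesis .
qed

lemma not_dvd_mult: "\<not> p dvd a \<Longrightarrow> \<not> p dvd b \<Longrightarrow> \<not> p dvd (a * b)"
  using pp prime_dvd_multD by blast

lemma Rs_ndvd: "x \<in> Rs \<Longrightarrow> \<not> p dvd x"
  using p_dvd_R[of x] by auto

lemma mult_inj:
  assumes "\<not> p dvd c" "S \<subseteq> R"
  shows "inj_on (\<lambda>x. (c*x) mod p) S"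
proof (rule inj_onI)
  fix x y assume xy: "x \<in> S" "y \<in> S" "(c*x) mod p = (c*y) mod p"
  have "coprime p c" by (rule prime_imp_coprime[OF pp assms(1)])
  then have cop: "coprime c p" by (simp add: coprime_commute)
  have "[c*x = c*y] (mod p)" using xy(3) by (simp add: cong_def)
  then have "[x = y] (mod p)" using cong_mult_lcancel[OF cop] by simp
  then show "x = y" using xy assms(2) by (intro cong_R) auto
qed

lemma sum_mult_R: "\<not> p dvd c \<Longrightarrow> (\<Sum>x\<in>R. F ((c*x) mod p)) = (\<Sum>x\<in>R. F x)"
  by (rule perm_sum) (use p2 mult_inj in auto)

lemma sum_mult_Rs:
  assumes "\<not> p dvd c"
  shows "(\<Sum>x\<in>Rs. F ((c*x) mod p)) = (\<Sum>x\<in>Rs. F x)"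
proof (rule perm_sum)
  show "(\<lambda>x. (c*x) mod p) ` Rs \<subseteq> Rs"
  proof
    fix y assume "y \<in> (\<lambda>x. (c*x) mod p) ` Rs"
    then obtain x where x: "x \<in> Rs" "y = (c*x) mod p" by auto
    have "\<not> p dvd (c*x)" using not_dvd_mult[OF assms Rs_ndvd[OF x(1)]] .
    then have "y \<noteq> 0" using x(2) by (simp add: dvd_eq_mod_eq_0)
    moreover have "0 \<le> y" "y < p" using x(2) p2 by auto
    ultimately show "y \<in> Rs" by auto
  qed
  show "inj_on (\<lambda>x. (c*x) mod p) Rs" using mult_inj[OF assms] by auto
qed auto

lemma sum_neg_R: "(\<Sum>x\<in>R. F ((-x) mod p)) = (\<Sum>x\<in>R. F x)"
proof -
  have "\<not> p dvd (-1)" using p2 by (simp add: zdvd_not_zless)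
  from sum_mult_R[OF this, of F] show ?thesis by simp
qed

lemma sum_shift_R: "(\<Sum>x\<in>R. F ((x + 1) mod p)) = (\<Sum>x\<in>R. F x)"
proof (rule perm_sum)
  show "inj_on (\<lambda>x. (x + 1) mod p) R"
  proof (rule inj_onI)
    fix x y assume xy: "x \<in> R" "y \<in> R" "(x + 1) mod p = (y + 1) mod p"
    then have "[x + 1 = y + 1] (mod p)" by (simp add: cong_def)
    then have "[x = y] (mod p)" by (simp add: cong_iff_dvd_diff)
    then show "x = y" using xy by (intro cong_R) auto
  qed
qed (use p2 in auto)

lemma sum_chi_R: "(\<Sum>x\<in>R. chi x) = 0"
proof -
  have "(\<Sum>c\<in>R. (\<Sum>z\<in>{z\<in>R. z^2 mod p = c}. (1::int))) = (\<Sum>z\<in>R. 1)"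
    by (rule sum.group) (use p2 in auto)
  moreover have "{z\<in>R. z^2 mod p = c} = {z\<in>R. [z^2 = c] (mod p)}" if "c \<in> R" for c
    using that by (auto simp: cong_def)
  ultimately have "(\<Sum>c\<in>R. int (card {z\<in>R. [z^2 = c] (mod p)})) = (\<Sum>z\<in>R. 1)"
    by simp
  moreover have "(\<Sum>c\<in>R. int (card {z\<in>R. [z^2 = c] (mod p)})) = (\<Sum>c\<in>R. 1 + chi c)"
    by (intro sum.cong refl sqcount)
  ultimately have "(\<Sum>c\<in>R. 1 + chi c) = (\<Sum>z\<in>R. 1)" by simp
  then show ?thesis by (simp add: sum.distrib)
qed

lemma sum_sq:
  "(\<Sum>y\<in>Rs. H (y^2 mod p)) = (\<Sum>v\<in>Rs. (1 + chi v) * H v)"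
proof -
  have img: "(\<lambda>y. y^2 mod p) ` Rs \<subseteq> Rs"
  proof
    fix v assume "v \<in> (\<lambda>y. y^2 mod p) ` Rs"
    then obtain y where y: "y \<in> Rs" "v = y^2 mod p" by auto
    have "\<not> p dvd (y*y)" using not_dvd_mult[OF Rs_ndvd[OF y(1)] Rs_ndvd[OF y(1)]] .
    then have "v \<noteq> 0" using y(2) by (simp add: dvd_eq_mod_eq_0 power2_eq_square)
    moreover have "0 \<le> v" "v < p" using y(2) p2 by auto
    ultimately show "v \<in> Rs" by auto
  qed
  have G: "(\<Sum>v\<in>Rs. (\<Sum>y\<in>{y\<in>Rs. y^2 mod p = v}. H (y^2 mod p))) = (\<Sum>y\<in>Rs. H (y^2 mod p))"
    by (rule sum.group) (use img in auto)
  have C: "(\<Sum>y\<in>{y\<in>Rs. y^2 mod p = v}. H (y^2 mod p)) = (1 + chi v) * H v"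
    if v: "v \<in> Rs" for v
  proof -
    have E: "{y\<in>Rs. y^2 mod p = v} = {z\<in>R. [z^2 = v] (mod p)}"
    proof (intro equalityI subsetI)
      fix z assume "z \<in> {y\<in>Rs. y^2 mod p = v}"
      then show "z \<in> {z\<in>R. [z^2 = v] (mod p)}" using v by (auto simp: cong_def)
    next
      fix z assume z: "z \<in> {z\<in>R. [z^2 = v] (mod p)}"
      then have zv: "z^2 mod p = v" using v by (simp add: cong_def)
      then have "z \<noteq> 0" using v by auto
      then show "z \<in> {y\<in>Rs. y^2 mod p = v}" using z zv by auto
    qed
    have "(\<Sum>y\<in>{y\<in>Rs. y^2 mod p = v}. H (y^2 mod p)) = (\<Sum>y\<in>{y\<in>Rs. y^2 mod p = v}. H v)"
      by (rule sum.cong) auto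
    also have "\<dots> = int (card {y\<in>Rs. y^2 mod p = v}) * H v" by simp
    also have "\<dots> = (1 + chi v) * H v" using E sqcount[of v] by simp
    finally show ?thesis .
  qed
  have "(\<Sum>y\<in>Rs. H (y^2 mod p)) = (\<Sum>v\<in>Rs. (\<Sum>y\<in>{y\<in>Rs. y^2 mod p = v}. H (y^2 mod p)))"
    using G by simp
  also have "\<dots> = (\<Sum>v\<in>Rs. (1 + chi v) * H v)" by (rule sum.cong[OF refl C])
  finally show ?thesis .
qed


definition minv :: "int \<Rightarrow> int" where "minv v = (SOME x. [v * x = 1] (mod p)) mod p"

lemma inv_prop:
  assumes v: "v \<in> Rs"
  shows "[v * minv v = 1] (mod p)" "minv v \<in> Rs"
proof -
  have "coprime p v" by (rule prime_imp_coprime[OF pp Rs_ndvd[OF v]])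
  then have "coprime v p" by (simp add: coprime_commute)
  then have "\<exists>x. [v * x = 1] (mod p)" by (rule cong_solve_coprime_int)
  then have h: "[v * (SOME x. [v * x = 1] (mod p)) = 1] (mod p)" by (rule someI_ex)
  define S where "S = (SOME x. [v * x = 1] (mod p))"
  have "minv v = S mod p" by (simp add: minv_def S_def)
  then have "[minv v = S] (mod p)" by (simp add: cong_def)
  then have "[v * minv v = v * (SOME x. [v * x = 1] (mod p))] (mod p)"
    unfolding S_def by (intro cong_mult) auto
  then show c: "[v * minv v = 1] (mod p)" using h by (rule cong_trans)
  have "minv v \<noteq> 0"
  proof
    assume "minv v = 0"
    then have "[0 = 1] (mod p)" using c by simp
    then have "p dvd 1" by (simp add: cong_iff_dvd_diff)
    then show False using p2 by (simp add: zdvd_not_zless)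
  qed
  moreover have "0 \<le> minv v" "minv v < p" unfolding minv_def using p2 by auto
  ultimately show "minv v \<in> Rs" by auto
qed

lemma sum_inv_Rs: "(\<Sum>x\<in>Rs. F (minv x)) = (\<Sum>x\<in>Rs. F x)"
proof (rule perm_sum)
  show "minv ` Rs \<subseteq> Rs" using inv_prop(2) by auto
  show "inj_on minv Rs"
  proof (rule inj_onI)
    fix a b assume ab: "a \<in> Rs" "b \<in> Rs" "minv a = minv b"
    define t where "t = minv a"
    have "p dvd (a * t - 1)" using inv_prop(1)[OF ab(1)] by (simp add: t_def cong_iff_dvd_diff)
    moreover have "p dvd (b * t - 1)" using inv_prop(1)[OF ab(2)] ab(3) by (simp add: t_def cong_iff_dvd_diff)
    ultimately have "p dvd (b * (a * t - 1) - a * (b * t - 1))" by simp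
    moreover have "b * (a * t - 1) - a * (b * t - 1) = a - b" by (simp add: algebra_simps)
    ultimately have "[a = b] (mod p)" by (simp add: cong_iff_dvd_diff)
    then show "a = b" using ab by (intro cong_R) auto
  qed
qed auto

lemma R_split: "R = insert 0 Rs" using p2 by auto

lemma sum_R_split: "(\<Sum>x\<in>R. F x) = F 0 + (\<Sum>x\<in>Rs. F x)"
  by (simp add: R_split)

lemma sum_chi_shift_Rs: "(\<Sum>v\<in>Rs. chi (v + 1)) = -1"
proof -
  have "(\<Sum>v\<in>R. chi (v + 1)) = (\<Sum>v\<in>R. chi ((v + 1) mod p))" by (simp add: chi_mod)
  also have "\<dots> = 0" using sum_shift_R[of chi] sum_chi_R by simp
  finally show ?thesis using sum_R_split[of "\<lambda>v. chi (v+1)"] chi_one by simp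
qed

lemma D_val: "(\<Sum>u\<in>Rs. chi (u^2 + 1)) = -2"
proof -
  have "(\<Sum>u\<in>Rs. chi (u^2 + 1)) = (\<Sum>u\<in>Rs. chi (u^2 mod p + 1))"
  proof (rule sum.cong[OF refl])
    fix u show "chi (u^2 + 1) = chi (u^2 mod p + 1)" by (rule chi_cong) (simp add: cong_def mod_simps)
  qed
  also have "\<dots> = (\<Sum>v\<in>Rs. (1 + chi v) * chi (v + 1))" by (rule sum_sq)
  also have "\<dots> = (\<Sum>v\<in>Rs. chi (v + 1)) + (\<Sum>v\<in>Rs. chi v * chi (v + 1))"
    by (simp add: sum.distrib algebra_simps)
  also have "(\<Sum>v\<in>Rs. chi v * chi (v + 1)) = (\<Sum>v\<in>Rs. chi (minv v + 1))"
  proof (rule sum.cong[OF refl])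
    fix v assume v: "v \<in> Rs"
    have "[v * (v + 1) = v * v * (minv v + 1)] (mod p)"
    proof -
      have "p dvd (v * minv v - 1)" using inv_prop(1)[OF v] by (simp add: cong_iff_dvd_diff)
      then have "p dvd - (v * (v * minv v - 1))" by simp
      moreover have "- (v * (v * minv v - 1)) = v * (v + 1) - v * v * (minv v + 1)" by (simp add: algebra_simps)
      ultimately show ?thesis by (simp add: cong_iff_dvd_diff)
    qed
    then have "chi (v * (v + 1)) = chi (v * v * (minv v + 1))" by (rule chi_cong)
    then show "chi v * chi (v + 1) = chi (minv v + 1)"
      using chi_sq[OF Rs_ndvd[OF v]] by (simp add: chi_mult)
  qed
  also have "\<dots> = (\<Sum>v\<in>Rs. chi (v + 1))" by (rule sum_inv_Rs)
  finally show ?thesis using sum_chi_shift_Rs by simp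
qed


definition E where "E = (\<Sum>u\<in>Rs. chi u * chi (u^2 + 1))"

lemma modc: "[a mod p = a] (mod p)" by (simp add: cong_def)

lemma chi_modsq: "chi ((a mod p)^2 + b) = chi (a^2 + b)"
  by (rule chi_cong) (intro cong_add cong_pow modc cong_refl)

lemma inner_w:
  assumes w: "w \<in> Rs"
  shows "(\<Sum>y\<in>Rs. chi (w^2 * (y^2)^2 + 1)) = -2 + chi w * E"
proof -
  have nw: "\<not> p dvd w" by (rule Rs_ndvd[OF w])
  have "(\<Sum>y\<in>Rs. chi (w^2 * (y^2)^2 + 1)) = (\<Sum>y\<in>Rs. chi (w^2 * (y^2 mod p)^2 + 1))"
  proof (rule sum.cong[OF refl])
    fix y show "chi (w^2 * (y^2)^2 + 1) = chi (w^2 * (y^2 mod p)^2 + 1)"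
      by (rule chi_cong) (intro cong_add cong_mult cong_pow modc cong_refl cong_sym)
  qed
  also have "\<dots> = (\<Sum>v\<in>Rs. (1 + chi v) * chi (w^2 * v^2 + 1))"
    by (rule sum_sq[where H = "\<lambda>v. chi (w^2 * v^2 + 1)"])
  also have "\<dots> = (\<Sum>v\<in>Rs. (\<lambda>u. (1 + chi w * chi u) * chi (u^2 + 1)) ((w * v) mod p))"
  proof (rule sum.cong[OF refl])
    fix v
    have "chi ((w * v) mod p) = chi w * chi v" by (simp add: chi_mod chi_mult)
    then have "chi w * chi ((w * v) mod p) = chi v" using chi_sq[OF nw] by (simp add: mult.assoc[symmetric])
    moreover have "chi (((w * v) mod p)^2 + 1) = chi (w^2 * v^2 + 1)"
      by (simp add: chi_modsq power_mult_distrib)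
    ultimately show "(1 + chi v) * chi (w^2 * v^2 + 1) =
        (\<lambda>u. (1 + chi w * chi u) * chi (u^2 + 1)) ((w * v) mod p)" by simp
  qed
  also have "\<dots> = (\<Sum>u\<in>Rs. (1 + chi w * chi u) * chi (u^2 + 1))"
    by (rule sum_mult_Rs[OF nw])
  also have "\<dots> = (\<Sum>u\<in>Rs. chi (u^2 + 1)) + chi w * E"
    by (simp add: E_def sum.distrib sum_distrib_left algebra_simps)
  finally show ?thesis using D_val by simp
qed

definition fxy :: "int \<Rightarrow> int \<Rightarrow> int" where "fxy x y = (x^2 * y^2 + 1) * (x^2 + y^2)"

lemma T_val: "(\<Sum>x\<in>Rs. \<Sum>y\<in>Rs. chi (fxy x y)) = 4 + E^2"
proof -
  have "(\<Sum>x\<in>Rs. \<Sum>y\<in>Rs. chi (fxy x y)) = (\<Sum>y\<in>Rs. \<Sum>x\<in>Rs. chi (fxy x y))"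
    by (rule sum.swap)
  also have "\<dots> = (\<Sum>y\<in>Rs. \<Sum>w\<in>Rs. chi (w^2 * (y^2)^2 + 1) * chi (w^2 + 1))"
  proof (rule sum.cong[OF refl])
    fix y assume y: "y \<in> Rs"
    have ny: "\<not> p dvd y" by (rule Rs_ndvd[OF y])
    have "(\<Sum>x\<in>Rs. chi (fxy x y)) = (\<Sum>w\<in>Rs. chi (fxy ((y * w) mod p) y))"
      by (rule sum_mult_Rs[OF ny, symmetric])
    also have "\<dots> = (\<Sum>w\<in>Rs. chi (w^2 * (y^2)^2 + 1) * chi (w^2 + 1))"
    proof (rule sum.cong[OF refl])
      fix w
      have "chi (fxy ((y * w) mod p) y) = chi (fxy (y * w) y)"
        unfolding fxy_def by (rule chi_cong) (intro cong_add cong_mult cong_pow modc cong_refl)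
      also have "fxy (y * w) y = y^2 * ((w^2 * (y^2)^2 + 1) * (w^2 + 1))"
        by (simp add: fxy_def algebra_simps power2_eq_square)
      also have "chi \<dots> = chi (w^2 * (y^2)^2 + 1) * chi (w^2 + 1)"
        using chi_sq2[OF ny] by (simp add: chi_mult)
      finally show "chi (fxy ((y * w) mod p) y) = chi (w^2 * (y^2)^2 + 1) * chi (w^2 + 1)" .
    qed
    finally show "(\<Sum>x\<in>Rs. chi (fxy x y)) = (\<Sum>w\<in>Rs. chi (w^2 * (y^2)^2 + 1) * chi (w^2 + 1))" .
  qed
  also have "\<dots> = (\<Sum>w\<in>Rs. chi (w^2 + 1) * (\<Sum>y\<in>Rs. chi (w^2 * (y^2)^2 + 1)))"
    by (subst sum.swap) (simp add: sum_distrib_left mult.commute)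
  also have "\<dots> = (\<Sum>w\<in>Rs. chi (w^2 + 1) * (-2 + chi w * E))"
  proof (rule sum.cong[OF refl])
    fix w assume w: "w \<in> Rs"
    show "chi (w^2 + 1) * (\<Sum>y\<in>Rs. chi (w^2 * (y^2)^2 + 1)) = chi (w^2 + 1) * (-2 + chi w * E)"
      by (subst inner_w[OF w]) (rule refl)
  qed
  also have "\<dots> = -2 * (\<Sum>w\<in>Rs. chi (w^2 + 1)) + E * E"
  proof -
    have "(\<Sum>w\<in>Rs. chi (w^2 + 1) * (-2 + chi w * E)) =
        (\<Sum>w\<in>Rs. -2 * chi (w^2 + 1) + (chi w * chi (w^2 + 1)) * E)"
      by (rule sum.cong) (simp_all add: algebra_simps)
    also have "\<dots> = -2 * (\<Sum>w\<in>Rs. chi (w^2 + 1)) + (\<Sum>w\<in>Rs. chi w * chi (w^2 + 1)) * E"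
      by (simp only: sum.distrib sum_distrib_left sum_distrib_right)
    also have "(\<Sum>w\<in>Rs. chi w * chi (w^2 + 1)) = E" by (simp add: E_def)
    finally show ?thesis .
  qed
  finally show ?thesis using D_val by (simp add: power2_eq_square)
qed

lemma S_val: "(\<Sum>x\<in>R. \<Sum>y\<in>R. chi (fxy x y)) = 2 * p + 2 + E^2"
proof -
  have sq: "(\<Sum>y\<in>Rs. chi (y^2)) = p - 1"
  proof -
    have "(\<Sum>y\<in>Rs. chi (y^2)) = (\<Sum>y\<in>Rs. 1)" by (rule sum.cong[OF refl]) (simp add: chi_sq2 Rs_ndvd)
    then show ?thesis using p2 by simp
  qed
  have c0: "chi 0 = 0" by (simp add: chi_zero_iff)
  have "(\<Sum>x\<in>R. \<Sum>y\<in>R. chi (fxy x y)) =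
      (\<Sum>y\<in>R. chi (fxy 0 y)) + (\<Sum>x\<in>Rs. chi (fxy x 0) + (\<Sum>y\<in>Rs. chi (fxy x y)))"
    by (simp add: sum_R_split)
  also have "(\<Sum>y\<in>R. chi (fxy 0 y)) = p - 1"
    using sq c0 by (simp add: sum_R_split fxy_def)
  also have "(\<Sum>x\<in>Rs. chi (fxy x 0) + (\<Sum>y\<in>Rs. chi (fxy x y))) = (p - 1) + (4 + E^2)"
    using sq T_val by (simp add: sum.distrib fxy_def)
  finally show ?thesis by simp
qed


definition aval where "aval = (\<Sum>x\<in>R. chi (x^3 - x))"

lemma M_val: "int (M_count (nat p)) = p^2 + 2 * p + 2 + E^2"
proof -
  have set: "{(x, y, z). x \<in> {0..<int (nat p)} \<and> y \<in> {0..<int (nat p)} \<and> z \<in> {0..<int (nat p)} \<and>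
      [z^2 = (x^2 * y^2 + 1) * (x^2 + y^2)] (mod int (nat p))} =
      (SIGMA x:R. SIGMA y:R. {z\<in>R. [z^2 = fxy x y] (mod p)})"
    using p2 by (auto simp: fxy_def)
  have "card (SIGMA x:R. SIGMA y:R. {z\<in>R. [z^2 = fxy x y] (mod p)}) =
      (\<Sum>x\<in>R. card (SIGMA y:R. {z\<in>R. [z^2 = fxy x y] (mod p)}))"
    by (rule card_SigmaI) (auto intro!: finite_SigmaI finite_subset[where B = R])
  also have "\<dots> = (\<Sum>x\<in>R. \<Sum>y\<in>R. card {z\<in>R. [z^2 = fxy x y] (mod p)})"
    by (intro sum.cong refl card_SigmaI) (auto intro!: finite_subset[where B = R])
  finally have "int (M_count (nat p)) = int (\<Sum>x\<in>R. \<Sum>y\<in>R. card {z\<in>R. [z^2 = fxy x y] (mod p)})"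
    unfolding M_count_def set by simp
  also have "\<dots> = (\<Sum>x\<in>R. \<Sum>y\<in>R. 1 + chi (fxy x y))"
    by (simp only: of_nat_sum sqcount)
  also have "\<dots> = p^2 + (\<Sum>x\<in>R. \<Sum>y\<in>R. chi (fxy x y))"
    using p2 by (simp add: sum.distrib power2_eq_square)
  finally show ?thesis using S_val by simp
qed

lemma N_val: "int (N_count (nat p)) = p + aval"
proof -
  have set: "{(x, y). x \<in> {0..<int (nat p)} \<and> y \<in> {0..<int (nat p)} \<and>
      [y^2 = x^3 - x] (mod int (nat p))} = (SIGMA x:R. {y\<in>R. [y^2 = x^3 - x] (mod p)})"
    using p2 by auto
  have "card (SIGMA x:R. {y\<in>R. [y^2 = x^3 - x] (mod p)}) = (\<Sum>x\<in>R. card {y\<in>R. [y^2 = x^3 - x] (mod p)})"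
    by (rule card_SigmaI) (auto intro!: finite_subset[where B = R])
  then have "int (N_count (nat p)) = int (\<Sum>x\<in>R. card {y\<in>R. [y^2 = x^3 - x] (mod p)})"
    unfolding N_count_def set by simp
  also have "\<dots> = (\<Sum>x\<in>R. 1 + chi (x^3 - x))"
    by (simp only: of_nat_sum sqcount)
  also have "\<dots> = p + aval"
    using p2 by (simp add: sum.distrib aval_def)
  finally show ?thesis .
qed

lemma B_eq_E: "(\<Sum>u\<in>R. chi (u^3 + u)) = E"
proof -
  have "(\<Sum>u\<in>R. chi (u^3 + u)) = chi 0 + (\<Sum>u\<in>Rs. chi (u^3 + u))" by (simp add: sum_R_split)
  also have "chi 0 = 0" by (simp add: chi_zero_iff)
  also have "(\<Sum>u\<in>Rs. chi (u^3 + u)) = E" unfolding E_def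
  proof (rule sum.cong[OF refl])
    fix u :: int have "u^3 + u = u * (u^2 + 1)" by (simp add: algebra_simps power3_eq_cube power2_eq_square)
    then show "chi (u^3 + u) = chi u * chi (u^2 + 1)" by (simp add: chi_mult)
  qed
  finally show ?thesis by simp
qed

lemma chi_m1: "chi (-1) = (-1) ^ ((nat p - 1) div 2)"
proof -
  have "[chi (-1) = (-1) ^ ((nat p - 1) div 2)] (mod p)" by (rule euler)
  moreover have "((-1::int) ^ ((nat p - 1) div 2)) \<in> {-1, 0, 1}"
    by (cases "even ((nat p - 1) div 2)") auto
  ultimately show ?thesis using chi_vals[of "-1"] by (intro small_cong_eq) auto
qed

lemma chi_neg: "chi (-a) = chi (-1) * chi a"
  using chi_mult[of "-1" a] by simp

lemma odd_sum:
  assumes m1: "chi (-1) = -1" and odd: "\<And>x. g (-x) = - g x"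
    and md: "\<And>x. chi (g (x mod p)) = chi (g x)"
  shows "(\<Sum>x\<in>R. chi (g x)) = 0"
proof -
  have "(\<Sum>x\<in>R. chi (g x)) = (\<Sum>x\<in>R. chi (g ((-x) mod p)))" by (rule sum_neg_R[symmetric])
  also have "\<dots> = (\<Sum>x\<in>R. - chi (g x))"
  proof (rule sum.cong[OF refl])
    fix x
    have "chi (g ((-x) mod p)) = chi ((-1) * g x)" by (simp add: md odd)
    then show "chi (g ((-x) mod p)) = - chi (g x)" using chi_neg[of "g x"] m1 by simp
  qed
  finally show ?thesis by (simp add: sum_negf)
qed

lemma md1: "chi ((x mod p)^3 - x mod p) = chi (x^3 - x)"
  by (rule chi_cong) (intro cong_diff cong_pow modc)

lemma md2: "chi ((x mod p)^3 + x mod p) = chi (x^3 + x)"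
  by (rule chi_cong) (intro cong_add cong_pow modc)

lemma case3:
  assumes "chi (-1) = -1"
  shows "aval = 0" "E = 0"
proof -
  show "aval = 0" unfolding aval_def
    by (rule odd_sum[OF assms, where g = "\<lambda>x. x^3 - x"]) (simp_all add: md1)
  have "(\<Sum>u\<in>R. chi (u^3 + u)) = 0"
    by (rule odd_sum[OF assms, where g = "\<lambda>x. x^3 + x"]) (simp_all add: md2)
  then show "E = 0" using B_eq_E by simp
qed

lemma case1:
  assumes "chi (-1) = 1"
  shows "aval^2 = E^2"
proof -
  have "\<not> [-1 = 0] (mod p)"
  proof
    assume "[-1 = 0] (mod p)"
    then have "p dvd 1" by (simp add: cong_0_iff)
    then show False using p2 by (simp add: zdvd_not_zless)
  qed
  then have "QuadRes p (-1)" using assms unfolding chi_def Legendre_def by (auto split: if_splits)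
  then obtain i where i: "[i^2 = -1] (mod p)" unfolding QuadRes_def by auto
  have ni: "\<not> p dvd i"
  proof
    assume "p dvd i"
    then have "p dvd i^2" by (simp add: power2_eq_square)
    then have "[i^2 = 0] (mod p)" by (simp add: cong_0_iff)
    then have "[-1 = 0] (mod p)" using cong_trans[OF cong_sym[OF i]] by blast
    then show False using \<open>\<not> [-1 = 0] (mod p)\<close> by simp
  qed
  have "aval = (\<Sum>u\<in>R. chi (((i * u) mod p)^3 - (i * u) mod p))"
    unfolding aval_def by (rule sum_mult_R[OF ni, symmetric])
  also have "\<dots> = (\<Sum>u\<in>R. chi (-i) * chi (u^3 + u))"
  proof (rule sum.cong[OF refl])
    fix u
    have "[(i*u)^3 - i*u = (-i) * (u^3 + u)] (mod p)"
    proof -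
      have "p dvd (i^2 + 1)" using i by (simp add: cong_iff_dvd_diff)
      then have "p dvd (i * u^3) * (i^2 + 1)" by simp
      moreover have "(i * u^3) * (i^2 + 1) = ((i*u)^3 - i*u) - (-i) * (u^3 + u)"
        by (simp add: algebra_simps power3_eq_cube power2_eq_square)
      ultimately show ?thesis by (simp add: cong_iff_dvd_diff)
    qed
    then have "chi ((i*u)^3 - i*u) = chi (-i) * chi (u^3 + u)" by (simp add: chi_cong chi_mult chi_neg[of i] chi_neg[of "i * (u^3 + u)"])
    then show "chi (((i * u) mod p)^3 - (i * u) mod p) = chi (-i) * chi (u^3 + u)" by (simp add: md1)
  qed
  also have "\<dots> = chi (-i) * E" by (simp add: sum_distrib_left[symmetric] B_eq_E)
  finally have "aval = chi (-i) * E" .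
  moreover have "chi (-i) * chi (-i) = 1" using chi_sq[of "-i"] ni by simp
  ultimately show ?thesis by (simp add: power2_eq_square algebra_simps)
qed


lemma J_val:
  assumes pk: "p = int (4*k+1)"
  shows "J k = aval"
proof -
  have k1: "k \<ge> 1" using pk p2 by auto
  have "J k = (\<Sum>i = 1..4*k-2. chi (int i * (int i + 1) * (int i + 2)))"
    unfolding J_def chi_def pk[symmetric] by (rule refl)
  also have "\<dots> = (\<Sum>j\<in>int ` {1..4*k-2}. chi (j * (j + 1) * (j + 2)))"
    by (subst sum.reindex) (auto simp: inj_on_def)
  also have "int ` {1..4*k-2} = {1..p-3}" using pk k1 by (simp add: image_int_atLeastAtMost of_nat_diff)
  also have "(\<Sum>j\<in>{1..p-3}. chi (j * (j + 1) * (j + 2))) = (\<Sum>x\<in>{2..p-2}. chi (x^3 - x))"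
  proof (rule sum.reindex_bij_witness[where i = "\<lambda>x. x - 1" and j = "\<lambda>j. j + 1"])
  qed (auto simp: algebra_simps power3_eq_cube)
  also have "\<dots> = aval" unfolding aval_def
  proof (rule sum.mono_neutral_left)
    show "finite R" by simp
    show "{2..p-2} \<subseteq> R" by auto
    show "\<forall>x\<in>R - {2..p-2}. chi (x^3 - x) = 0"
    proof
      fix x assume x: "x \<in> R - {2..p-2}"
      then have "x = 0 \<or> x = 1 \<or> x + 1 = p" by auto
      moreover have "x^3 - x = (x - 1) * x * (x + 1)" by (simp add: algebra_simps power3_eq_cube)
      ultimately have "p dvd x^3 - x" by auto
      then show "chi (x^3 - x) = 0" by (simp add: chi_zero_iff)
    qed
  qed
  finally show ?thesis .
qed

end

theorem theorem4p5:
  fixes p :: nat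
  assumes "prime p" and "odd p"
  shows "int (M_count p) = (int p + 1)^2 + (int (N_count p) - int p)^2 + 1 \<and>
         (\<forall>k. p = 4*k+1 \<longrightarrow> int (M_count p) = (int p + 1)^2 + (J k)^2 + 1) \<and>
         (\<forall>k. p = 4*k+3 \<longrightarrow> int (M_count p) = (int p + 1)^2 + 1)"
proof -
  have p2: "p > 2" using assms prime_ge_2_nat[of p] by (cases "p = 2") auto
  interpret oddp "int p" using assms p2 by unfold_locales auto
  have M: "int (M_count p) = int p ^ 2 + 2 * int p + 2 + E^2" using M_val by simp
  have N: "int (N_count p) - int p = aval" using N_val by simp
  have sq: "aval^2 = E^2"
  proof (cases "p mod 4 = 1")
    case True
    then have "even ((p - 1) div 2)" by presburger
    then have "chi (-1) = 1" using chi_m1 by simp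
    then show ?thesis by (rule case1)
  next
    case False
    then have "p mod 4 = 3" using assms(2) by presburger
    then have "odd ((p - 1) div 2)" by presburger
    then have "chi (-1) = -1" using chi_m1 by simp
    then show ?thesis using case3 by simp
  qed
  have part1: "int (M_count p) = (int p + 1)^2 + (int (N_count p) - int p)^2 + 1"
    using M N sq by (simp add: power2_eq_square algebra_simps)
  show ?thesis
  proof (intro conjI allI impI)
    show "int (M_count p) = (int p + 1)^2 + (int (N_count p) - int p)^2 + 1" by (rule part1)
  next
    fix k assume "p = 4*k+1"
    then have "J k = aval" using J_val by simp
    then show "int (M_count p) = (int p + 1)^2 + (J k)^2 + 1" using part1 N by simp
  next
    fix k assume k: "p = 4*k+3"
    then have "odd ((p - 1) div 2)" by presburger
    then have "chi (-1) = -1" using chi_m1 by simp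
    then have "aval = 0" using case3 by simp
    then show "int (M_count p) = (int p + 1)^2 + 1" using part1 N by simp
  qed
qed

end
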